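(* Let $X=\{0,1,2,3\}$ and let $a,b,c$ be the transformations of $X^\ast$ defined recursively (with $\emptyset\mapsto\emptyset$) by $a(0w)=1\,a(w)$, $a(1w)=0w$, $a(2w)=2w$, $a(3w)=3w$; $b(0w)=2\,b(w)$, $b(2w)=0w$, $b(1w)=1w$, $b(3w)=3w$; $c(0w)=3\,c(w)$, $c(3w)=0w$, $c(1w)=1w$, $c(2w)=2w$. For $n\ge 1$ let $A_n=a_n+a_n^{-1}+b_n+b_n^{-1}+c_n+c_n^{-1}$, where $a_n,b_n,c_n$ are the $4^n\times 4^n$ permutation matrices of the actions of $a,b,c$ on $X^n$, and let $P_n(\lambda)=\det(\lambda I-A_n)$. Then for every $n\ge1$, $$P_{n+1}(\lambda)=(\lambda-4)^{2\cdot 4^n}\,P_n(f(\lambda)),\qquad f(\lambda)=\lambda^2-4\lambda-6,$$ and $P_1(\lambda)=(\lambda-6)(\lambda+2)(\lambda-4)^2$.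
   Context: $A_n$ is the adjacency matrix of the $n$-th Schreier graph of the group generated by $a,b,c$ (the star automaton group of the star with 3 leaves) acting on words of length $n$; $P_n$ is its (monic) characteristic polynomial. *)

theory Defs
  imports "Jordan_Normal_Form.Char_Poly"
begin

fun act_a :: "nat list \<Rightarrow> nat list" where
  "act_a [] = []"
| "act_a (x # w) = (if x = 0 then 1 # act_a w else if x = 1 then 0 # w else x # w)"

fun act_b :: "nat list \<Rightarrow> nat list" where
  "act_b [] = []"
| "act_b (x # w) = (if x = 0 then 2 # act_b w else if x = 2 then 0 # w else x # w)"

fun act_c :: "nat list \<Rightarrow> nat list" where
  "act_c [] = []"
| "act_c (x # w) = (if x = 0 then 3 # act_c w else if x = 3 then 0 # w else x # w)"

definition words :: "nat \<Rightarrow> nat list set" where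
  "words n = {w. length w = n \<and> set w \<subseteq> {0..<4}}"

text \<open>Indexing X^n by {0..<4^n}: base-4 digits, first letter least significant.\<close>
definition word_of_index :: "nat \<Rightarrow> nat \<Rightarrow> nat list" where
  "word_of_index n i = map (\<lambda>k. i div 4 ^ k mod 4) [0..<n]"

definition perm_mat :: "nat \<Rightarrow> (nat list \<Rightarrow> nat list) \<Rightarrow> int mat" where
  "perm_mat n g = mat (4 ^ n) (4 ^ n)
     (\<lambda>(i, j). if g (word_of_index n j) = word_of_index n i then 1 else 0)"

definition perm_mat_inv :: "nat \<Rightarrow> (nat list \<Rightarrow> nat list) \<Rightarrow> int mat" where
  "perm_mat_inv n g = perm_mat n (the_inv_into (words n) g)"

definition schreier_adj :: "nat \<Rightarrow> int mat" where
  "schreier_adj n =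
     perm_mat n act_a + perm_mat_inv n act_a +
     perm_mat n act_b + perm_mat_inv n act_b +
     perm_mat n act_c + perm_mat_inv n act_c"

definition P :: "nat \<Rightarrow> int poly" where
  "P n = char_poly (schreier_adj n)"

end

theory Submission
  imports Defs
begin


fun gen :: "nat \<Rightarrow> nat list \<Rightarrow> nat list" where
  "gen k [] = []"
| "gen k (x # w) = (if x = 0 then k # gen k w else if x = k then 0 # w else x # w)"

lemma act_a_gen: "act_a = gen 1"
proof
  fix w show "act_a w = gen 1 w" by (induction w) auto
qed
lemma act_b_gen: "act_b = gen 2"
proof
  fix w show "act_b w = gen 2 w" by (induction w) auto
qed
lemma act_c_gen: "act_c = gen 3"
proof
  fix w show "act_c w = gen 3 w" by (induction w) auto
qed

lemma gen_length[simp]: "length (gen k w) = length w"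
  by (induction w) auto

lemma gen_set: "k < 4 \<Longrightarrow> set w \<subseteq> {0..<4} \<Longrightarrow> set (gen k w) \<subseteq> {0..<4}"
  by (induction w) auto

lemma gen_inj: "k \<noteq> 0 \<Longrightarrow> gen k w = gen k v \<Longrightarrow> w = v"
proof (induction w arbitrary: v)
  case Nil then show ?case by (cases v) (auto split: if_splits)
next
  case (Cons x w)
  then show ?case by (cases v) (auto split: if_splits)
qed

lemma gen_Cons_eq: "k \<noteq> 0 \<Longrightarrow> (gen k (y # v) = x # u) \<longleftrightarrow>
   ((y = 0 \<and> x = k \<and> gen k v = u) \<or> (y = k \<and> x = 0 \<and> v = u) \<or> (y \<noteq> 0 \<and> y \<noteq> k \<and> x = y \<and> v = u))"
  by auto

lemma woi_Suc: "word_of_index (Suc n) i = (i mod 4) # word_of_index n (i div 4)"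
proof -
  have "[0..<Suc n] = 0 # map Suc [0..<n]" by (simp add: map_Suc_upt upt_conv_Cons)
  then show ?thesis unfolding word_of_index_def by (simp add: div_mult2_eq)
qed

lemma woi_words: "word_of_index n i \<in> words n"
  unfolding word_of_index_def words_def by auto

lemma woi_inj: "i < 4 ^ n \<Longrightarrow> j < 4 ^ n \<Longrightarrow> word_of_index n i = word_of_index n j \<Longrightarrow> i = j"
proof (induction n arbitrary: i j)
  case 0 then show ?case by simp
next
  case (Suc n)
  have "i div 4 < 4 ^ n" "j div 4 < 4 ^ n" using Suc.prems by auto
  with Suc have "i div 4 = j div 4" "i mod 4 = j mod 4" by (auto simp: woi_Suc)
  then show ?case by (metis div_mod_decomp)
qed

lemma woi_surj: "w \<in> words n \<Longrightarrow> \<exists>i<4^n. word_of_index n i = w"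
proof (induction n arbitrary: w)
  case 0 then show ?case by (auto simp: words_def word_of_index_def)
next
  case (Suc n)
  then obtain x v where w: "w = x # v" and x: "x < 4" and v: "v \<in> words n"
    by (cases w) (auto simp: words_def)
  from Suc.IH[OF v] obtain i where i: "i < 4^n" "word_of_index n i = v" by auto
  have "x + 4 * i < 4 ^ Suc n" using x i by simp
  moreover have "word_of_index (Suc n) (x + 4 * i) = w" using x i w by (simp add: woi_Suc)
  ultimately show ?case by blast
qed

lemma words_image: "words n = word_of_index n ` {..<4^n}"
  using woi_surj woi_words by fastforce

lemma finite_words: "finite (words n)"
  unfolding words_image by simp

lemma gen_words: "k < 4 \<Longrightarrow> w \<in> words n \<Longrightarrow> gen k w \<in> words n"
  unfolding words_def using gen_set by auto

lemma gen_bij: "0 < k \<Longrightarrow> k < 4 \<Longrightarrow> gen k ` words n = words n"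
  apply (rule endo_inj_surj[OF finite_words])
  using gen_words apply blast
  using gen_inj by (metis inj_onI not_gr0)

lemma inv_entry:
  assumes k: "0 < k" "k < 4" and u: "u \<in> words n" and v: "v \<in> words n"
  shows "(the_inv_into (words n) (gen k) v = u) \<longleftrightarrow> gen k u = v"
proof -
  have inj: "inj_on (gen k) (words n)" using gen_inj k by (metis inj_onI not_gr0)
  show ?thesis
  proof
    assume "the_inv_into (words n) (gen k) v = u"
    then show "gen k u = v" using f_the_inv_into_f[OF inj] v gen_bij[OF k] by metis
  next
    assume "gen k u = v"
    then show "the_inv_into (words n) (gen k) v = u" using the_inv_into_f_eq[OF inj] u by blast
  qed
qed

definition e :: "nat \<Rightarrow> nat \<Rightarrow> nat \<Rightarrow> nat \<Rightarrow> int" where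
  "e n k i j = (if gen k (word_of_index n j) = word_of_index n i then 1 else 0)"

lemma adj_entry:
  assumes "i < 4^n" "j < 4^n"
  shows "schreier_adj n $$ (i,j) = (\<Sum>k\<in>{1,2,3}. e n k i j + e n k j i)"
  using assms
  by (simp add: schreier_adj_def perm_mat_def perm_mat_inv_def act_a_gen act_b_gen act_c_gen
     inv_entry woi_words e_def)


lemma woi_eq_iff: "i < 4 ^ n \<Longrightarrow> j < 4 ^ n \<Longrightarrow> word_of_index n i = word_of_index n j \<longleftrightarrow> i = j"
  using woi_inj by blast

lemma e_Suc:
  assumes k: "k \<noteq> 0" and x: "x < 4" and y: "y < 4" and i: "i < 4^n" and j: "j < 4^n"
  shows "e (Suc n) k (x + 4 * i) (y + 4 * j) =
    (if y = 0 \<and> x = k then e n k i j else if (y = k \<and> x = 0) \<or> (y \<noteq> 0 \<and> y \<noteq> k \<and> x = y) then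
       (if i = j then 1 else 0) else 0)"
  using assms unfolding e_def by (auto simp: woi_Suc woi_eq_iff)

lemma adj_Suc:
  assumes x: "x < 4" and y: "y < 4" and i: "i < 4^n" and j: "j < 4^n"
  shows "schreier_adj (Suc n) $$ (x + 4 * i, y + 4 * j) =
    (if x = 0 \<and> y = 0 then 0
     else if x = 0 then (if i = j then 1 else 0) + e n y j i
     else if y = 0 then (if i = j then 1 else 0) + e n x i j
     else if x = y then (if i = j then 4 else 0) else 0)"
proof -
  have lt: "x + 4 * i < 4 ^ Suc n" "y + 4 * j < 4 ^ Suc n" using x y i j by auto
  have "x \<in> {0,1,2,3}" "y \<in> {0,1,2,3}" using x y by auto
  have s: "schreier_adj (Suc n) $$ (x + 4 * i, y + 4 * j) =
    (\<Sum>k\<in>{1,2,3::nat}. (if y = 0 \<and> x = k then e n k i j else if (y = k \<and> x = 0) \<or> (y \<noteq> 0 \<and> y \<noteq> k \<and> x = y) then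
       (if i = j then 1 else 0) else 0) + (if x = 0 \<and> y = k then e n k j i else if (x = k \<and> y = 0) \<or> (x \<noteq> 0 \<and> x \<noteq> k \<and> y = x) then
       (if j = i then 1 else 0) else 0))"
    (is "_ = (\<Sum>k\<in>_. ?rhs k)")
    unfolding adj_entry[OF lt]
  proof (intro sum.cong refl)
    fix k :: nat assume "k \<in> {1,2,3}" hence k0: "k \<noteq> 0" by auto
    show "e (Suc n) k (x + 4 * i) (y + 4 * j) + e (Suc n) k (y + 4 * j) (x + 4 * i) = ?rhs k"
      unfolding e_Suc[OF k0 x y i j] e_Suc[OF k0 y x j i] by simp
  qed
  show ?thesis unfolding s using \<open>x \<in> _\<close> \<open>y \<in> _\<close> by auto
qed



lemma det_reindex:
  assumes A: "A \<in> carrier_mat m m" and p: "p permutes {0..<m}"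
  shows "det (mat m m (\<lambda>(i,j). A $$ (p i, p j))) = det A"
proof -
  have pl: "\<And>i. i < m \<Longrightarrow> p i < m" using p by (meson atLeastLessThan_iff permutes_in_image zero_le)
  define A' where "A' = mat m m (\<lambda>(i,j). A $$ (i, p j))"
  have A': "A' \<in> carrier_mat m m" unfolding A'_def by simp
  have "mat m m (\<lambda>(i,j). A $$ (p i, p j)) = mat m m (\<lambda>(i,j). A' $$ (p i, j))"
    by (rule eq_matI) (auto simp: A'_def pl)
  then have 1: "det (mat m m (\<lambda>(i,j). A $$ (p i, p j))) = signof p * det A'"
    using det_permute_rows[OF A' p] by simp
  have "A'\<^sup>T = mat m m (\<lambda>(i,j). A\<^sup>T $$ (p i, j))"
    by (rule eq_matI) (use A in \<open>auto simp: A'_def pl\<close>)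
  moreover have AT: "A\<^sup>T \<in> carrier_mat m m" using A by simp
  ultimately have "det A' = signof p * det A"
    using det_permute_rows[OF AT p] det_transpose[OF A'] det_transpose[OF A]
    by simp
  with 1 have "det (mat m m (\<lambda>(i,j). A $$ (p i, p j))) = (signof p * signof p) * det A" by simp
  also have "signof p * signof p = (1::'a)"
    by (simp add: sign_def)
  finally show ?thesis by simp
qed


lemma sum_split_blocks:
  fixes f :: "nat \<Rightarrow> 'a::comm_monoid_add"
  shows "(\<Sum>q\<in>{0..<m*N}. f q) = (\<Sum>k<m. \<Sum>r<N. f (k*N + r))"
proof (induction m)
  case 0 then show ?case by simp
next
  case (Suc m)
  have "{0..<Suc m * N} = {0..<m*N} \<union> {m*N..<m*N+N}" by auto
  then have "(\<Sum>q\<in>{0..<Suc m*N}. f q) = (\<Sum>q\<in>{0..<m*N}. f q) + (\<Sum>q\<in>{m*N..<m*N+N}. f q)"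
    by (simp add: sum.union_disjoint ivl_disj_int_one(2))
  also have "(\<Sum>q\<in>{m*N..<m*N+N}. f q) = (\<Sum>r<N. f (m*N + r))"
    by (simp add: sum.shift_bounds_nat_ivl[where k = "m*N" and m = 0, simplified] lessThan_atLeast0 add.commute)
  finally show ?case using Suc by simp
qed

lemma e_delta:
  assumes k: "0 < k" "k < 4" and i: "i < 4^n"
  obtains r0 where "r0 < 4^n" "gen k (word_of_index n i) = word_of_index n r0"
    "\<And>r. r < 4^n \<Longrightarrow> e n k r i = (if r = r0 then 1 else 0)"
proof -
  have "gen k (word_of_index n i) \<in> words n" using gen_words k woi_words by blast
  then obtain r0 where r0: "r0 < 4^n" "word_of_index n r0 = gen k (word_of_index n i)"
    using woi_surj by blast
  show ?thesis
    by (rule that[of r0]) (use r0 in \<open>auto simp: e_def woi_eq_iff\<close>)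
qed

lemma sum_delta_e:
  assumes k: "0 < k" "k < 4" and i: "i < 4^n" and j: "j < 4^n"
  shows "(\<Sum>r<4^n. e n k r i * e n k r j) = (if i = j then 1 else 0)"
proof -
  obtain r0 where r0: "r0 < 4^n" "gen k (word_of_index n i) = word_of_index n r0"
    "\<And>r. r < 4^n \<Longrightarrow> e n k r i = (if r = r0 then 1 else 0)" using e_delta[OF k i] by blast
  obtain r1 where r1: "r1 < 4^n" "gen k (word_of_index n j) = word_of_index n r1"
    "\<And>r. r < 4^n \<Longrightarrow> e n k r j = (if r = r1 then 1 else 0)" using e_delta[OF k j] by blast
  have "(\<Sum>r<4^n. e n k r i * e n k r j) = (\<Sum>r<4^n. if r = r0 then (if r0 = r1 then 1 else 0) else 0)"
    by (rule sum.cong) (auto simp: r0(3) r1(3))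
  also have "\<dots> = (if r0 = r1 then 1 else 0)" using r0(1) by simp
  also have "(r0 = r1) = (i = j)"
    using r0 r1 i j gen_inj[of k] k woi_eq_iff by (metis not_gr0)
  finally show ?thesis .
qed

definition Bi :: "nat \<Rightarrow> int mat" where
  "Bi n = mat (3 * 4^n) (4^n) (\<lambda>(q,j). (if q mod 4^n = j then 1 else 0) + e n (q div 4^n + 1) (q mod 4^n) j)"

lemma Bi_carrier: "Bi n \<in> carrier_mat (3 * 4^n) (4^n)" unfolding Bi_def by simp

lemma inner_sum:
  assumes k: "0 < k" "k < 4" and i: "i < 4^n" and j: "j < 4^n"
  shows "(\<Sum>r<4^n. ((if r = i then 1 else 0) + e n k r i) * ((if r = j then 1 else 0) + e n k r j))
     = 2 * (if i = j then 1 else 0) + e n k i j + e n k j i"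
proof -
  have "(\<Sum>r<4^n. ((if r = i then 1 else 0) + e n k r i) * ((if r = j then 1 else 0) + e n k r j))
     = (\<Sum>r<4^n. (if r = i then (if r = j then 1 else 0) else 0)) + (\<Sum>r<4^n. (if r = i then e n k r j else 0))
       + (\<Sum>r<4^n. (if r = j then e n k r i else 0)) + (\<Sum>r<4^n. e n k r i * e n k r j)"
  proof -
    have "\<And>r. ((if r = i then 1 else 0) + e n k r i) * ((if r = j then 1 else 0) + e n k r j)
      = (if r = i then (if r = j then 1 else 0) else 0) + (if r = i then e n k r j else 0)
       + (if r = j then e n k r i else 0) + e n k r i * e n k r j"
      by (auto simp: algebra_simps)
    then show ?thesis by (simp only: sum.distrib)
  qed
  also have "\<dots> = (if i = j then 1 else 0) + e n k i j + e n k j i + (if i = j then 1 else 0)"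
    using i j sum_delta_e[OF k i j] by simp
  finally show ?thesis by simp
qed

lemma adj_carrier: "schreier_adj n \<in> carrier_mat (4^n) (4^n)"
  by (simp add: schreier_adj_def perm_mat_def perm_mat_inv_def)

lemma adj_dims[simp]: "dim_row (schreier_adj n) = 4^n" "dim_col (schreier_adj n) = 4^n"
  using adj_carrier by auto

lemma gram:
  "(Bi n)\<^sup>T * Bi n = 6 \<cdot>\<^sub>m 1\<^sub>m (4^n) + schreier_adj n"
proof (rule eq_matI)
  let ?N = "4^n :: nat"
  show "dim_row ((Bi n)\<^sup>T * Bi n) = dim_row (6 \<cdot>\<^sub>m 1\<^sub>m ?N + schreier_adj n)"
    by (simp add: Bi_def schreier_adj_def perm_mat_def perm_mat_inv_def)
  show "dim_col ((Bi n)\<^sup>T * Bi n) = dim_col (6 \<cdot>\<^sub>m 1\<^sub>m ?N + schreier_adj n)"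
    by (simp add: Bi_def schreier_adj_def perm_mat_def perm_mat_inv_def)
  fix i j assume "i < dim_row (6 \<cdot>\<^sub>m 1\<^sub>m ?N + schreier_adj n)" "j < dim_col (6 \<cdot>\<^sub>m 1\<^sub>m ?N + schreier_adj n)"
  then have i: "i < ?N" and j: "j < ?N" by auto
  have "((Bi n)\<^sup>T * Bi n) $$ (i,j) = (\<Sum>q\<in>{0..<3*?N}. Bi n $$ (q,i) * Bi n $$ (q,j))"
    using i j by (simp add: Bi_def scalar_prod_def)
  also have "\<dots> = (\<Sum>k<3. \<Sum>r<?N. Bi n $$ (k*?N+r,i) * Bi n $$ (k*?N+r,j))"
    by (rule sum_split_blocks)
  also have "\<dots> = (\<Sum>k<3. 2 * (if i = j then 1 else 0) + e n (k+1) i j + e n (k+1) j i)"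
  proof (rule sum.cong[OF refl])
    fix k assume k: "k \<in> {..<3::nat}"
    have "(\<Sum>r<?N. Bi n $$ (k*?N+r,i) * Bi n $$ (k*?N+r,j)) =
      (\<Sum>r<?N. ((if r = i then 1 else 0) + e n (k+1) r i) * ((if r = j then 1 else 0) + e n (k+1) r j))"
    proof (rule sum.cong[OF refl])
      fix r assume r: "r \<in> {..<?N}"
      have "k*?N + r < (k+1)*?N" using r by simp
      moreover have "(k+1)*?N \<le> 3*?N" using k by (intro mult_le_mono1) auto
      ultimately have "k*?N + r < 3 * ?N" by linarith
      moreover have "(k*?N + r) mod ?N = r" "(k*?N + r) div ?N = k" using r by auto
      ultimately show "Bi n $$ (k*?N+r,i) * Bi n $$ (k*?N+r,j) = ((if r = i then 1 else 0) + e n (k+1) r i) * ((if r = j then 1 else 0) + e n (k+1) r j)"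
        using i j by (simp add: Bi_def)
    qed
    also have "\<dots> = 2 * (if i = j then 1 else 0) + e n (k+1) i j + e n (k+1) j i"
      by (rule inner_sum) (use k i j in auto)
    finally show "(\<Sum>r<?N. Bi n $$ (k*?N+r,i) * Bi n $$ (k*?N+r,j)) = 2 * (if i = j then 1 else 0) + e n (k+1) i j + e n (k+1) j i" .
  qed
  also have "\<dots> = (6 \<cdot>\<^sub>m 1\<^sub>m ?N + schreier_adj n) $$ (i,j)"
    using i j by (simp add: adj_entry numeral_3_eq_3 lessThan_Suc eval_nat_numeral)
  finally show "((Bi n)\<^sup>T * Bi n) $$ (i,j) = (6 \<cdot>\<^sub>m 1\<^sub>m ?N + schreier_adj n) $$ (i,j)" .
qed



definition sig :: "nat \<Rightarrow> nat \<Rightarrow> nat" where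
  "sig n p = (if p < 4 * 4^n then p div 4^n + 4 * (p mod 4^n) else p)"

lemma sig_lt: "p < 4 * 4^n \<Longrightarrow> sig n p < 4 * 4^n"
proof -
  assume p: "p < 4 * 4^n"
  let ?N = "4^n :: nat"
  have "p div ?N < 4" using p by (simp add: less_mult_imp_div_less)
  moreover have "p mod ?N < ?N" by simp
  ultimately have "p div ?N + 4 * (p mod ?N) \<le> 3 + 4 * (?N - 1)" by linarith
  also have "\<dots> < 4 * ?N" by (simp add: algebra_simps)  
  finally show ?thesis using p by (simp add: sig_def)
qed

lemma sig_mod: "p < 4 * 4^n \<Longrightarrow> sig n p mod 4 = p div 4^n"
  by (simp add: sig_def less_mult_imp_div_less)
lemma sig_div: "p < 4 * 4^n \<Longrightarrow> sig n p div 4 = p mod 4^n"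
  by (simp add: sig_def less_mult_imp_div_less)

lemma sig_inj: "p < 4 * 4^n \<Longrightarrow> q < 4 * 4^n \<Longrightarrow> sig n p = sig n q \<Longrightarrow> p = q"
  by (metis sig_mod sig_div div_mod_decomp)

lemma sig_permutes: "sig n permutes {0..<4 * 4^n}"
proof (rule bij_imp_permutes)
  have inj: "inj_on (sig n) {0..<4 * 4^n}" using sig_inj by (meson atLeastLessThan_iff inj_onI)
  have "sig n ` {0..<4 * 4^n} = {0..<4 * 4^n}"
    by (rule endo_inj_surj) (use inj sig_lt in auto)
  with inj show "bij_betw (sig n) {0..<4 * 4^n} {0..<4 * 4^n}" by (simp add: bij_betw_def)
  show "\<And>x. x \<notin> {0..<4 * 4 ^ n} \<Longrightarrow> sig n x = x" by (simp add: sig_def)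
qed


lemma sig_eq: "p < 4 * 4^n \<Longrightarrow> sig n p = p div 4^n + 4 * (p mod 4^n)"
  by (simp add: sig_def)

lemma cp_entry:
  assumes "a < 4^m" "b < 4^m"
  shows "char_poly_matrix (schreier_adj m) $$ (a,b) = (if a = b then [:0,1:] else 0) - [: schreier_adj m $$ (a,b) :]"
  using assms by (simp add: char_poly_matrix_def)

definition Bc :: "nat \<Rightarrow> int poly mat" where
  "Bc n = map_mat of_int (Bi n)"

definition Mp :: "nat \<Rightarrow> int poly mat" where
  "Mp n = four_block_mat ([:0,1:] \<cdot>\<^sub>m 1\<^sub>m (4^n)) (- (Bc n)\<^sup>T) (- Bc n) ([:-4,1:] \<cdot>\<^sub>m 1\<^sub>m (3 * 4^n))"

lemma Bc_carrier: "Bc n \<in> carrier_mat (3 * 4^n) (4^n)" unfolding Bc_def Bi_def by simp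

lemma Bc_entry: "q < 3 * 4^n \<Longrightarrow> j < 4^n \<Longrightarrow>
   Bc n $$ (q,j) = [: (if q mod 4^n = j then 1 else 0) + e n (q div 4^n + 1) (q mod 4^n) j :]"
  unfolding Bc_def Bi_def by (simp add: of_int_poly)

lemma reidx:
  "mat (4 * 4^n) (4 * 4^n) (\<lambda>(p,q). char_poly_matrix (schreier_adj (Suc n)) $$ (sig n p, sig n q)) = Mp n"
proof (rule eq_matI)
  let ?N = "4^n :: nat"
  show "dim_row (mat (4 * 4^n) (4 * 4^n) (\<lambda>(p,q). char_poly_matrix (schreier_adj (Suc n)) $$ (sig n p, sig n q))) = dim_row (Mp n)"
    by (simp add: Mp_def)
  show "dim_col (mat (4 * 4^n) (4 * 4^n) (\<lambda>(p,q). char_poly_matrix (schreier_adj (Suc n)) $$ (sig n p, sig n q))) = dim_col (Mp n)"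
    by (simp add: Mp_def)
  fix p q assume "p < dim_row (Mp n)" "q < dim_col (Mp n)"
  then have p: "p < 4 * ?N" and q: "q < 4 * ?N" by (auto simp: Mp_def)
  have x: "p div ?N < 4" and y: "q div ?N < 4" using p q by (auto simp: less_mult_imp_div_less)
  have i: "p mod ?N < ?N" and j: "q mod ?N < ?N" by auto
  have pq: "(p = q) = (p div ?N = q div ?N \<and> p mod ?N = q mod ?N)" by (metis div_mod_decomp)
  have lhs: "mat (4 * 4^n) (4 * 4^n) (\<lambda>(p,q). char_poly_matrix (schreier_adj (Suc n)) $$ (sig n p, sig n q)) $$ (p,q)
    = (if p = q then [:0,1:] else 0) - [: schreier_adj (Suc n) $$ (p div ?N + 4 * (p mod ?N), q div ?N + 4 * (q mod ?N)) :]"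
    using p q sig_lt[OF p] sig_lt[OF q] sig_inj[OF p q]
    by (simp add: cp_entry sig_eq)
  have rhs: "Mp n $$ (p,q) = (if p < ?N then if q < ?N then [:0,1:] * (if p = q then 1 else 0) else - (Bc n $$ (q - ?N, p))
     else if q < ?N then - (Bc n $$ (p - ?N, q)) else [:-4,1:] * (if p = q then 1 else 0))"
    using p q Bc_carrier[of n] by (auto simp: Mp_def four_block_mat_def Let_def)
  note adjS = adj_Suc[OF x y i j]
  have key: "(if p = q then [:0,1:] else 0) - [: schreier_adj (Suc n) $$ (p div ?N + 4 * (p mod ?N), q div ?N + 4 * (q mod ?N)) :]
    = (if p < ?N then if q < ?N then [:0,1:] * (if p = q then 1 else 0) else - (Bc n $$ (q - ?N, p))
     else if q < ?N then - (Bc n $$ (p - ?N, q)) else [:-4,1:] * (if p = q then 1 else 0))"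
  proof (cases "p < ?N"; cases "q < ?N")
    assume a: "p < ?N" "q < ?N"
    then show ?thesis unfolding adjS by simp
  next
    assume a: "p < ?N" "\<not> q < ?N"
    have "q - ?N < 3 * ?N" "(q - ?N) mod ?N = q mod ?N" "(q - ?N) div ?N + 1 = q div ?N" "q div ?N \<noteq> 0" "p \<noteq> q"
      using a q by (auto simp: le_mod_geq le_div_geq)
    with a show ?thesis unfolding adjS by (simp add: Bc_entry eq_commute[of p])
  next
    assume a: "\<not> p < ?N" "q < ?N"
    have "p - ?N < 3 * ?N" "(p - ?N) mod ?N = p mod ?N" "(p - ?N) div ?N + 1 = p div ?N" "p div ?N \<noteq> 0" "p \<noteq> q"
      using a p by (auto simp: le_mod_geq le_div_geq)
    with a show ?thesis unfolding adjS by (simp add: Bc_entry)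
  next
    assume a: "\<not> p < ?N" "\<not> q < ?N"
    have "p div ?N \<noteq> 0" "q div ?N \<noteq> 0" using a by (auto simp: le_div_geq)
    show ?thesis
    proof (cases "p = q")
      case True
      then show ?thesis using a \<open>p div ?N \<noteq> 0\<close> unfolding adjS by simp
    next
      case False
      then have "\<not> (p div ?N = q div ?N \<and> p mod ?N = q mod ?N)" using pq by blast
      then show ?thesis using a False \<open>p div ?N \<noteq> 0\<close> \<open>q div ?N \<noteq> 0\<close> unfolding adjS by simp
    qed
  qed
  show "mat (4 * 4^n) (4 * 4^n) (\<lambda>(p,q). char_poly_matrix (schreier_adj (Suc n)) $$ (sig n p, sig n q)) $$ (p,q) = Mp n $$ (p,q)"
    using lhs key rhs by simp
qed



lemma pcompose_hom: "comm_ring_hom (\<lambda>p::int poly. pcompose p q)"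
  by unfold_locales (simp_all add: pcompose_add pcompose_mult pcompose_1)

lemma P_reidx: "P (Suc n) = det (Mp n)"
proof -
  have c: "char_poly_matrix (schreier_adj (Suc n)) \<in> carrier_mat (4 * 4^n) (4 * 4^n)"
    using adj_carrier[of "Suc n"] by simp
  show ?thesis
    unfolding P_def char_poly_def reidx[symmetric] det_reindex[OF c sig_permutes] ..
qed

lemma cpm_dims[simp]: "dim_row (char_poly_matrix (schreier_adj n)) = 4^n" "dim_col (char_poly_matrix (schreier_adj n)) = 4^n"
  using char_poly_matrix_closed[OF adj_carrier[of n]] by auto

lemma TL_eq:
  "([:0,1:] \<cdot>\<^sub>m 1\<^sub>m (4^n)) * ([:-4,1:] \<cdot>\<^sub>m 1\<^sub>m (4^n)) + (- (Bc n)\<^sup>T) * Bc n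
   = map_mat (\<lambda>p. pcompose p [:-6,-4,1:]) (char_poly_matrix (schreier_adj n))"
proof -
  let ?N = "4^n::nat"
  have B: "Bc n \<in> carrier_mat (3*?N) ?N" by (rule Bc_carrier)
  have BT: "(Bc n)\<^sup>T \<in> carrier_mat ?N (3*?N)" using B by simp
  have "(- (Bc n)\<^sup>T) * Bc n = - ((Bc n)\<^sup>T * Bc n)"
    using B BT by (simp add: uminus_mult_left_mat)
  also have "(Bc n)\<^sup>T * Bc n = map_mat of_int ((Bi n)\<^sup>T * Bi n)"
    unfolding Bc_def map_mat_transpose
    by (rule of_int_hom.mat_hom_mult[symmetric]) (use Bi_carrier in auto)
  also have "\<dots> = map_mat of_int (6 \<cdot>\<^sub>m 1\<^sub>m ?N + schreier_adj n)" by (simp add: gram)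
  finally have 1: "(- (Bc n)\<^sup>T) * Bc n = - map_mat of_int (6 \<cdot>\<^sub>m 1\<^sub>m ?N + schreier_adj n)" .
  show ?thesis unfolding 1
  proof (rule eq_matI)
    fix i j assume "i < dim_row (map_mat (\<lambda>p. pcompose p [:-6,-4,1:]) (char_poly_matrix (schreier_adj n)))"
      "j < dim_col (map_mat (\<lambda>p. pcompose p [:-6,-4,1:]) (char_poly_matrix (schreier_adj n)))"
    then have i: "i < ?N" and j: "j < ?N" by auto
    have "(([:0,1:] \<cdot>\<^sub>m 1\<^sub>m ?N) * ([:-4,1:] \<cdot>\<^sub>m 1\<^sub>m ?N)) $$ (i,j) = (if i = j then [:0,1:] * [:-4,1:] else 0)"
      using i j by (simp add: mult_smult_distrib mult_smult_assoc_mat)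
    then show "(([:0,1:] \<cdot>\<^sub>m 1\<^sub>m ?N) * ([:-4,1:] \<cdot>\<^sub>m 1\<^sub>m ?N) + - map_mat of_int (6 \<cdot>\<^sub>m 1\<^sub>m ?N + schreier_adj n)) $$ (i,j)
      = map_mat (\<lambda>p. pcompose p [:-6,-4,1:]) (char_poly_matrix (schreier_adj n)) $$ (i,j)"
      using i j by (simp add: cp_entry pcompose_diff of_int_poly)
  qed auto
qed


lemma P_step: "P (Suc n) = [:-4,1:] ^ (2 * 4 ^ n) * pcompose (P n) [:-6,-4,1:]"
proof -
  let ?N = "4^n::nat"
  let ?K = "3*4^n::nat"
  let ?X = "[:0,1:] :: int poly"
  let ?mu = "[:-4,1:] :: int poly"
  let ?B = "Bc n"
  define L where "L = four_block_mat (?mu \<cdot>\<^sub>m 1\<^sub>m ?N) (0\<^sub>m ?N ?K) ?B (1\<^sub>m ?K)"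
  have B: "?B \<in> carrier_mat ?K ?N" by (rule Bc_carrier)
  have BT: "?B\<^sup>T \<in> carrier_mat ?N ?K" using B by simp
  have M: "Mp n \<in> carrier_mat (?N + ?K) (?N + ?K)" unfolding Mp_def using B BT by auto
  have Lc: "L \<in> carrier_mat (?N + ?K) (?N + ?K)" unfolding L_def using B by auto
  have prod: "Mp n * L = four_block_mat
      (map_mat (\<lambda>p. pcompose p [:-6,-4,1:]) (char_poly_matrix (schreier_adj n)))
      (- ?B\<^sup>T) (0\<^sub>m ?K ?N) (?mu \<cdot>\<^sub>m 1\<^sub>m ?K)"
  proof -
    have "Mp n * L = four_block_mat
      ((?X \<cdot>\<^sub>m 1\<^sub>m ?N) * (?mu \<cdot>\<^sub>m 1\<^sub>m ?N) + (- ?B\<^sup>T) * ?B)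
      ((?X \<cdot>\<^sub>m 1\<^sub>m ?N) * 0\<^sub>m ?N ?K + (- ?B\<^sup>T) * 1\<^sub>m ?K)
      ((- ?B) * (?mu \<cdot>\<^sub>m 1\<^sub>m ?N) + (?mu \<cdot>\<^sub>m 1\<^sub>m ?K) * ?B)
      ((- ?B) * 0\<^sub>m ?N ?K + (?mu \<cdot>\<^sub>m 1\<^sub>m ?K) * 1\<^sub>m ?K)"
      unfolding Mp_def L_def
      by (rule mult_four_block_mat) (use B BT in auto)
    also have "(?X \<cdot>\<^sub>m 1\<^sub>m ?N) * 0\<^sub>m ?N ?K + (- ?B\<^sup>T) * 1\<^sub>m ?K = - ?B\<^sup>T"
      using BT by simp
    also have "(- ?B) * (?mu \<cdot>\<^sub>m 1\<^sub>m ?N) + (?mu \<cdot>\<^sub>m 1\<^sub>m ?K) * ?B = 0\<^sub>m ?K ?N"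
    proof -
      have "?B * (?mu \<cdot>\<^sub>m 1\<^sub>m ?N) = ?mu \<cdot>\<^sub>m (?B * 1\<^sub>m ?N)"
        by (rule mult_smult_distrib[OF B one_carrier_mat])
      also have "\<dots> = ?mu \<cdot>\<^sub>m ?B" using B by simp
      finally have "(- ?B) * (?mu \<cdot>\<^sub>m 1\<^sub>m ?N) = - (?mu \<cdot>\<^sub>m ?B)"
        using B by (subst uminus_mult_left_mat) auto
      moreover have "(?mu \<cdot>\<^sub>m 1\<^sub>m ?K) * ?B = ?mu \<cdot>\<^sub>m ?B"
        using mult_smult_assoc_mat[OF one_carrier_mat B, of ?mu] B by simp
      ultimately show ?thesis using B by (simp add: uminus_l_inv_mat)
    qed
    also have "(- ?B) * 0\<^sub>m ?N ?K + (?mu \<cdot>\<^sub>m 1\<^sub>m ?K) * 1\<^sub>m ?K = ?mu \<cdot>\<^sub>m 1\<^sub>m ?K"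
      using B by simp
    finally show ?thesis unfolding TL_eq .
  qed
  have "det (Mp n * L) = det (Mp n) * det L" by (rule det_mult[OF M Lc])
  also have "det L = ?mu ^ ?N"
    unfolding L_def
    by (subst det_four_block_mat_upper_right_zero[of _ ?N _ ?K]) (use B in auto)
  finally have 1: "det (Mp n * L) = det (Mp n) * ?mu ^ ?N" .
  have "det (Mp n * L) = det (map_mat (\<lambda>p. pcompose p [:-6,-4,1:]) (char_poly_matrix (schreier_adj n))) * ?mu ^ ?K"
    unfolding prod
    by (subst det_four_block_mat_lower_left_zero[of _ ?N _ ?K]) (use BT in auto)
  also have "det (map_mat (\<lambda>p. pcompose p [:-6,-4,1:]) (char_poly_matrix (schreier_adj n))) = pcompose (P n) [:-6,-4,1:]"
    unfolding P_def char_poly_def by (rule comm_ring_hom.hom_det[OF pcompose_hom])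
  finally have 2: "det (Mp n) * ?mu ^ ?N = pcompose (P n) [:-6,-4,1:] * ?mu ^ ?K" using 1 by simp
  have "?mu ^ ?K = (?mu ^ (2 * ?N)) * ?mu ^ ?N" by (simp add: power_add[symmetric])
  then have "det (Mp n) * ?mu ^ ?N = (?mu ^ (2 * ?N) * pcompose (P n) [:-6,-4,1:]) * ?mu ^ ?N"
    using 2 by (simp add: ac_simps)
  moreover have "?mu ^ ?N \<noteq> 0" by simp
  ultimately have "det (Mp n) = ?mu ^ (2 * ?N) * pcompose (P n) [:-6,-4,1:]" by simp
  then show ?thesis using P_reidx by simp
qed

lemma P0: "P 0 = [:-6, 1:]"
proof -
  have "schreier_adj 0 = mat 1 1 (\<lambda>_. 6)"
    by (rule eq_matI) (auto simp: adj_entry e_def word_of_index_def)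
  moreover have "det (char_poly_matrix (mat 1 1 (\<lambda>_. 6::int))) = [:-6,1:]"
    by (subst det_upper_triangular[of _ 1]) (auto simp: upper_triangular_def char_poly_matrix_def diag_mat_def)
  ultimately show ?thesis
    unfolding P_def char_poly_def by simp
qed


theorem theorem3p2:
  shows "(\<forall>n::nat. n \<ge> 1 \<longrightarrow>
           P (n + 1) = [:-4, 1:] ^ (2 * 4 ^ n) * pcompose (P n) [:-6, -4, 1:])
         \<and> P 1 = [:-6, 1:] * [:2, 1:] * [:-4, 1:] ^ 2"
proof
  show "\<forall>n::nat. n \<ge> 1 \<longrightarrow>
           P (n + 1) = [:-4, 1:] ^ (2 * 4 ^ n) * pcompose (P n) [:-6, -4, 1:]"
    using P_step by simp
  have "P 1 = [:-4, 1:] ^ 2 * pcompose [:-6, 1:] [:-6, -4, 1:]"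
    using P_step[of 0] P0 by simp
  then show "P 1 = [:-6, 1:] * [:2, 1:] * [:-4, 1:] ^ 2"
    by (simp add: pcompose_pCons eval_nat_numeral)
qed

end
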